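(* Let $q$ be a prime power, $m\ge2$, $s,\ell,r_1,\dots,r_m\ge1$ integers, $k=m\ell-s$ with $k\ge\ell$, $n=\sum_{i=1}^m(\ell+r_i)$. Consider the matrix $G(x,y)$ with entries in the polynomial ring $\mathbb{F}_q[x_{w,z},y_{t,i,j}]$ ($1\le w\le k$, $1\le z\le s$, $1\le t\le\ell$, $1\le i\le m$, $1\le j\le r_i$) given by $G(x,y)=(C_1\mid D_1\mid\dots\mid C_m\mid D_m)$, where $(C_1\mid\dots\mid C_m)=[I_k\mid A]$ with $A=(x_{w,z})$ a $k\times s$ matrix of variables, each $C_i$ has $\ell$ columns, and $D_i$ has $r_i$ columns, the $j$-th being $\sum_{t=1}^{\ell}y_{t,i,j}C_i^{(t)}$ with $C_i^{(t)}$ the $t$-th column of $C_i$. Call the $i$-th block of $G(x,y)$ the columns of $(C_i\mid D_i)$. Let $\mathcal T_{k,\ell}(G)$ be the set of $k\times k$ submatrices of $G(x,y)$ having at most $\ell$ columns in each block, and let $p(x,y)=\mathrm{lcm}\{\det S\mid S\in\mathcal T_{k,\ell}(G)\}$. Then the total degree of $p$ satisfies $$\deg p(x,y)\le 2(n-k)\binom{n-1}{k-1}.$$ *)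

theory Defs
  imports Main "HOL-Library.Poly_Mapping" "HOL-Combinatorics.Permutations"
begin

text \<open>Variables of the polynomial ring (0-based indices):
  X w z stands for x_{w+1,z+1}, Y t i j stands for y_{t+1,i+1,j+1}.\<close>
datatype var = X nat nat | Y nat nat nat

type_synonym 'a mpoly = "((var \<Rightarrow>\<^sub>0 nat) \<Rightarrow>\<^sub>0 'a)"

definition Var :: "var \<Rightarrow> 'a::comm_ring_1 mpoly" where
  "Var v = Poly_Mapping.single (Poly_Mapping.single v 1) 1"

text \<open>Total degree (the zero polynomial gets degree 0).\<close>
definition tdeg :: "'a::zero mpoly \<Rightarrow> nat" where
  "tdeg p = Max (insert 0 ((\<lambda>mon. sum (Poly_Mapping.lookup mon) (Poly_Mapping.keys mon)) ` Poly_Mapping.keys p))"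

definition IA :: "nat \<Rightarrow> nat \<Rightarrow> nat \<Rightarrow> 'a::comm_ring_1 mpoly" where
  "IA k w c = (if c < k then (if w = c then 1 else 0) else Var (X w (c - k)))"

definition Ccol :: "nat \<Rightarrow> nat \<Rightarrow> nat \<Rightarrow> nat \<Rightarrow> nat \<Rightarrow> 'a::comm_ring_1 mpoly" where
  "Ccol k l i t w = IA k w (i * l + t)"

definition Dcol :: "nat \<Rightarrow> nat \<Rightarrow> nat \<Rightarrow> nat \<Rightarrow> nat \<Rightarrow> 'a::comm_ring_1 mpoly" where
  "Dcol k l i j w = (\<Sum>t<l. Var (Y t i j) * Ccol k l i t w)"

text \<open>Start position of block i in G = (C_1|D_1|...|C_m|D_m).\<close>
definition off :: "nat \<Rightarrow> (nat \<Rightarrow> nat) \<Rightarrow> nat \<Rightarrow> nat" where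
  "off l r i = (\<Sum>i'<i. l + r i')"

definition blk :: "nat \<Rightarrow> (nat \<Rightarrow> nat) \<Rightarrow> nat \<Rightarrow> nat" where
  "blk l r c = (LEAST i. c < off l r (Suc i))"

definition Gmat :: "nat \<Rightarrow> nat \<Rightarrow> (nat \<Rightarrow> nat) \<Rightarrow> nat \<Rightarrow> nat \<Rightarrow> 'a::comm_ring_1 mpoly" where
  "Gmat k l r w c =
     (let i = blk l r c; p = c - off l r i in
      if p < l then Ccol k l i p w else Dcol k l i (p - l) w)"

text \<open>Sets of column positions giving the submatrices in T_{k,l}(G).\<close>
definition Tkl :: "nat \<Rightarrow> nat \<Rightarrow> nat \<Rightarrow> (nat \<Rightarrow> nat) \<Rightarrow> nat set set" where
  "Tkl m k l r = {T. T \<subseteq> {0..<off l r m} \<and> card T = k \<and>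
      (\<forall>i<m. card (T \<inter> {off l r i..<off l r (Suc i)}) \<le> l)}"

definition detk :: "nat \<Rightarrow> (nat \<Rightarrow> nat \<Rightarrow> 'a::comm_ring_1) \<Rightarrow> 'a" where
  "detk k M = (\<Sum>\<sigma> | \<sigma> permutes {0..<k}. of_int (sign \<sigma>) * (\<Prod>w<k. M w (\<sigma> w)))"

definition subdet :: "nat \<Rightarrow> nat \<Rightarrow> (nat \<Rightarrow> nat) \<Rightarrow> nat set \<Rightarrow> 'a::comm_ring_1 mpoly" where
  "subdet k l r T = detk k (\<lambda>w c. Gmat k l r w (sorted_list_of_set T ! c))"

definition is_lcm :: "'a::comm_ring_1 set \<Rightarrow> 'a \<Rightarrow> bool" where
  "is_lcm F p \<longleftrightarrow> (\<forall>f\<in>F. f dvd p) \<and> (\<forall>q. (\<forall>f\<in>F. f dvd q) \<longrightarrow> p dvd q)"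

end

theory Submission
  imports Defs "HOL-Library.Nat_Bijection"
begin

fun venc :: "var \<Rightarrow> nat" where
  "venc (X a b) = prod_encode (0, prod_encode (a, b))"
| "venc (Y a b c) = prod_encode (1, prod_encode (a, prod_encode (b, c)))"

lemma inj_venc: "inj venc"
proof (rule injI)
  fix u v assume "venc u = venc v" then show "u = v"
    by (cases u; cases v) (auto simp: prod_encode_eq)
qed

instantiation var :: linorder
begin
definition less_eq_var :: "var \<Rightarrow> var \<Rightarrow> bool" where "less_eq_var u v = (venc u \<le> venc v)"
definition less_var :: "var \<Rightarrow> var \<Rightarrow> bool" where "less_var u v = (venc u < venc v)"
instance
  by standard (auto simp: less_eq_var_def less_var_def inj_eq[OF inj_venc])
end

definition mdeg :: "(var \<Rightarrow>\<^sub>0 nat) \<Rightarrow> nat" where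
  "mdeg mon = sum (Poly_Mapping.lookup mon) (Poly_Mapping.keys mon)"

lemma mdeg_add: "mdeg (a + b) = mdeg a + mdeg b"
  unfolding mdeg_def by (rule setsum_keys_plus_distrib) auto

lemma mdeg_zero[simp]: "mdeg 0 = 0" by (simp add: mdeg_def)

lemma tdeg_alt: "tdeg p = Max (insert 0 (mdeg ` Poly_Mapping.keys p))"
  unfolding tdeg_def mdeg_def ..

lemma tdeg_ge: "mon \<in> Poly_Mapping.keys p \<Longrightarrow> mdeg mon \<le> tdeg p"
  unfolding tdeg_alt by (rule Max_ge) auto

lemma tdeg_le: "(\<And>mon. mon \<in> Poly_Mapping.keys p \<Longrightarrow> mdeg mon \<le> d) \<Longrightarrow> tdeg p \<le> d"
  unfolding tdeg_alt by (rule Max.boundedI) auto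

lemma tdeg_attained: assumes "p \<noteq> 0" shows "\<exists>mon\<in>Poly_Mapping.keys p. mdeg mon = tdeg p"
proof -
  have ne: "Poly_Mapping.keys p \<noteq> {}" using assms by simp
  have "tdeg p \<in> insert 0 (mdeg ` Poly_Mapping.keys p)"
    unfolding tdeg_alt by (rule Max_in) auto
  then show ?thesis
  proof
    assume "tdeg p = 0"
    then show ?thesis using ne tdeg_ge by fastforce
  qed auto
qed

lemma tdeg_zero[simp]: "tdeg 0 = 0" by (simp add: tdeg_def)

lemma tdeg_add: "tdeg (f + g) \<le> max (tdeg f) (tdeg g)"
proof (rule tdeg_le)
  fix mon assume "mon \<in> Poly_Mapping.keys (f + g)"
  then have "mon \<in> Poly_Mapping.keys f \<or> mon \<in> Poly_Mapping.keys g" using keys_add[of f g] by blast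
  then show "mdeg mon \<le> max (tdeg f) (tdeg g)"
    using tdeg_ge[of mon f] tdeg_ge[of mon g] by (metis le_max_iff_disj)
qed

lemma tdeg_mult: "tdeg ((f::'a::comm_ring_1 mpoly) * g) \<le> tdeg f + tdeg g"
proof (rule tdeg_le)
  fix mon assume "mon \<in> Poly_Mapping.keys (f * g)"
  then obtain a b where "mon = a + b" "a \<in> Poly_Mapping.keys f" "b \<in> Poly_Mapping.keys g"
    using keys_mult by blast
  then show "mdeg mon \<le> tdeg f + tdeg g" by (simp add: mdeg_add add_mono tdeg_ge)
qed

lemma tdeg_uminus: "tdeg (- (f::'a::comm_ring_1 mpoly)) = tdeg f"
  by (simp add: tdeg_def keys_def lookup_uminus)

lemma tdeg_const: "tdeg (Poly_Mapping.single 0 c) = 0"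
  by (rule le_zero_eq[THEN iffD1], rule tdeg_le) (auto split: if_splits)

lemma tdeg_one[simp]: "tdeg (1::'a::comm_ring_1 mpoly) = 0"
  by (rule le_zero_eq[THEN iffD1], rule tdeg_le) auto

lemma tdeg_of_int[simp]: "tdeg (of_int c::'a::comm_ring_1 mpoly) = 0"
  by (simp add: tdeg_const flip: single_of_int)

lemma tdeg_Var: "tdeg (Var v :: 'a::comm_ring_1 mpoly) \<le> 1"
  unfolding Var_def by (rule tdeg_le) (auto simp: mdeg_def split: if_splits)

lemma tdeg_sum: "tdeg (sum (f::_ \<Rightarrow> 'a::comm_ring_1 mpoly) A) \<le> d" if "\<And>x. x \<in> A \<Longrightarrow> tdeg (f x) \<le> d"
  using that
proof (induction A rule: infinite_finite_induct)
  case (insert x F)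
  then have "tdeg (f x) \<le> d" "tdeg (sum f F) \<le> d" by auto
  then show ?case using tdeg_add[of "f x" "sum f F"] by (simp add: insert.hyps max_def split: if_splits)
qed auto

lemma tdeg_prod: "tdeg (prod (f::_ \<Rightarrow> 'a::comm_ring_1 mpoly) A) \<le> (\<Sum>x\<in>A. tdeg (f x))"
proof (induction A rule: infinite_finite_induct)
  case (insert x F) then show ?case using tdeg_mult[of "f x" "prod f F"] by auto
qed auto

lemma tdeg_mult_ge:
  fixes f g :: "'a::idom mpoly"
  assumes "g \<noteq> 0" shows "tdeg f \<le> tdeg (f * g)"
proof (cases "f = 0")
  case True then show ?thesis by simp
next
  case False
  define F where "F = {x \<in> Poly_Mapping.keys f. mdeg x = tdeg f}"
  define G where "G = {x \<in> Poly_Mapping.keys g. mdeg x = tdeg g}"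
  have fF: "finite F" "F \<noteq> {}" using tdeg_attained[OF False] by (auto simp: F_def)
  have fG: "finite G" "G \<noteq> {}" using tdeg_attained[OF assms] by (auto simp: G_def)
  define a0 where "a0 = Max F"
  define b0 where "b0 = Max G"
  have a0: "a0 \<in> F" "\<And>x. x \<in> F \<Longrightarrow> x \<le> a0" using fF by (auto simp: a0_def)
  have b0: "b0 \<in> G" "\<And>x. x \<in> G \<Longrightarrow> x \<le> b0" using fG by (auto simp: b0_def)
  define q where "q = a0 + b0"
  have finf: "finite {a. Poly_Mapping.lookup f a \<noteq> 0}" and fing: "finite {a. Poly_Mapping.lookup g a \<noteq> 0}"
    by auto
  have "Poly_Mapping.lookup (f * g) q = prod_fun (Poly_Mapping.lookup f) (Poly_Mapping.lookup g) q"
    by (simp add: times_poly_mapping.rep_eq)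
  also have "\<dots> = (\<Sum>(a, b). Poly_Mapping.lookup f a * Poly_Mapping.lookup g b when q = a + b)"
    by (rule prod_fun_unfold_prod[OF finf fing])
  also have "\<dots> = (\<Sum>(a, b). Poly_Mapping.lookup f a * Poly_Mapping.lookup g b when (a0, b0) = (a, b))"
  proof (rule Sum_any.cong, clarify)
    fix a b
    show "(Poly_Mapping.lookup f a * Poly_Mapping.lookup g b when q = a + b) =
          (Poly_Mapping.lookup f a * Poly_Mapping.lookup g b when (a0, b0) = (a, b))"
    proof (cases "a \<in> Poly_Mapping.keys f \<and> b \<in> Poly_Mapping.keys g \<and> q = a + b")
      case True
      then have ab: "a \<in> Poly_Mapping.keys f" "b \<in> Poly_Mapping.keys g" "q = a + b" by auto
      have "mdeg a + mdeg b = tdeg f + tdeg g"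
        using ab a0(1) b0(1) by (simp add: q_def mdeg_add[symmetric] F_def G_def) (metis mdeg_add)
      moreover have "mdeg a \<le> tdeg f" "mdeg b \<le> tdeg g" using ab tdeg_ge by auto
      ultimately have "a \<in> F" "b \<in> G" using ab by (auto simp: F_def G_def)
      then have le: "a \<le> a0" "b \<le> b0" using a0 b0 by auto
      have "a = a0"
      proof (rule ccontr)
        assume "a \<noteq> a0" then have "a < a0" using le by simp
        then have "a + b < a0 + b" by (rule add_strict_right_mono)
        also have "\<dots> \<le> a0 + b0" using le by (simp add: add_left_mono)
        finally show False using ab by (simp add: q_def)
      qed
      moreover have "b = b0"
      proof (rule ccontr)
        assume "b \<noteq> b0" then have "b < b0" using le by simp
        then have "a + b < a + b0" by (rule add_strict_left_mono)
        then show False using ab \<open>a = a0\<close> by (simp add: q_def)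
      qed
      ultimately show ?thesis using ab by simp
    next
      case False
      then show ?thesis using a0(1) b0(1)
        by (auto simp: when_def F_def G_def q_def in_keys_iff)
    qed
  qed
  also have "\<dots> = (\<Sum>ab. (case ab of (a, b) \<Rightarrow> Poly_Mapping.lookup f a * Poly_Mapping.lookup g b) when (a0, b0) = ab)"
    unfolding split_def when_def by auto
  also have "\<dots> = Poly_Mapping.lookup f a0 * Poly_Mapping.lookup g b0"
    by simp
  finally have "Poly_Mapping.lookup (f * g) q \<noteq> 0"
    using a0(1) b0(1) by (auto simp: F_def G_def in_keys_iff)
  then have "q \<in> Poly_Mapping.keys (f * g)" by (simp add: in_keys_iff)
  then have "mdeg q \<le> tdeg (f * g)" by (rule tdeg_ge)
  moreover have "mdeg q = tdeg f + tdeg g" using a0(1) b0(1) by (simp add: q_def mdeg_add F_def G_def)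
  ultimately show ?thesis by simp
qed


lemma off_Suc: "off l r (Suc i) = off l r i + (l + r i)"
  by (simp add: off_def)

lemma off_mono: "i \<le> j \<Longrightarrow> off l r i \<le> off l r j"
  unfolding off_def by (rule sum_mono2) auto

lemma blk_eq: assumes "off l r i \<le> c" "c < off l r (Suc i)" shows "blk l r c = i"
  unfolding blk_def
proof (rule Least_equality)
  show "c < off l r (Suc i)" by fact
  fix y assume y: "c < off l r (Suc y)"
  show "i \<le> y"
  proof (rule ccontr)
    assume "\<not> i \<le> y" then have "Suc y \<le> i" by simp
    then have "off l r (Suc y) \<le> off l r i" by (rule off_mono)
    then show False using y assms by simp
  qed
qed

lemma tdeg_IA: "tdeg (IA k w c :: 'a::comm_ring_1 mpoly) \<le> 1"
  unfolding IA_def using tdeg_Var by auto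

lemma tdeg_Gmat: "tdeg (Gmat k l r w c :: 'a::comm_ring_1 mpoly) \<le> 2"
proof -
  have "tdeg (Dcol k l i j w :: 'a mpoly) \<le> 2" for i j
    unfolding Dcol_def
  proof (rule tdeg_sum)
    fix t
    have "tdeg (Var (Y t i j) * Ccol k l i t w :: 'a mpoly) \<le> tdeg (Var (Y t i j) :: 'a mpoly) + tdeg (Ccol k l i t w :: 'a mpoly)"
      by (rule tdeg_mult)
    also have "\<dots> \<le> 1 + 1" unfolding Ccol_def by (intro add_mono tdeg_Var tdeg_IA)
    finally show "tdeg (Var (Y t i j) * Ccol k l i t w :: 'a mpoly) \<le> 2" by simp
  qed
  moreover have "tdeg (Ccol k l i t w :: 'a mpoly) \<le> 2" for i t
    unfolding Ccol_def by (rule order_trans[OF tdeg_IA]) simp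
  ultimately show ?thesis by (simp add: Gmat_def Let_def)
qed

definition idc :: "nat \<Rightarrow> (nat \<Rightarrow> nat) \<Rightarrow> nat \<Rightarrow> nat" where
  "idc l r w = off l r (w div l) + w mod l"

lemma blk_idc: assumes "l \<ge> 1" shows "blk l r (idc l r w) = w div l"
proof -
  have "w mod l < l" using assms by simp
  then have "w mod l < l + r (w div l)" by linarith
  then show ?thesis by (intro blk_eq) (auto simp: idc_def off_Suc)
qed

lemma Gmat_idc: assumes "l \<ge> 1" "w < k"
  shows "Gmat k l r v (idc l r w) = (IA k v w :: 'a::comm_ring_1 mpoly)"
proof -
  have "w mod l < l" using assms by simp
  moreover have "w div l * l + w mod l = w" by simp
  ultimately show ?thesis using assms
    by (simp add: Gmat_def Let_def blk_idc Ccol_def) (simp add: idc_def)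
qed

lemma tdeg_Gmat_idc: assumes "l \<ge> 1" "w < k"
  shows "tdeg (Gmat k l r v (idc l r w) :: 'a::comm_ring_1 mpoly) = 0"
  using assms by (simp add: Gmat_idc IA_def)

lemma inj_idc: assumes "l \<ge> 1" shows "inj (idc l r)"
proof (rule injI)
  fix a b assume h: "idc l r a = idc l r b"
  then have "a div l = b div l" using blk_idc[OF assms, of r a] blk_idc[OF assms, of r b] by simp
  moreover then have "a mod l = b mod l" using h by (simp add: idc_def)
  ultimately show "a = b" by (metis div_mult_mod_eq)
qed

lemma idc_lt: assumes "l \<ge> 1" "w < m * l" shows "idc l r w < off l r m"
proof -
  have i: "w div l < m" using assms by (simp add: less_mult_imp_div_less)
  have "w mod l < l" using assms by simp
  then have "w mod l < l + r (w div l)" by linarith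
  then have "idc l r w < off l r (Suc (w div l))" by (simp add: idc_def off_Suc)
  also have "\<dots> \<le> off l r m" using i by (intro off_mono) simp
  finally show ?thesis .
qed

lemma card_subsets_with:
  assumes "finite S" "x \<in> S" "k \<ge> 1"
  shows "card {T. T \<subseteq> S \<and> card T = k \<and> x \<in> T} = (card S - 1) choose (k - 1)"
proof -
  have eq: "{T. T \<subseteq> S \<and> card T = k \<and> x \<in> T} = insert x ` {U. U \<subseteq> S - {x} \<and> card U = k - 1}"
  proof (rule set_eqI, rule iffI)
    fix T assume T: "T \<in> {T. T \<subseteq> S \<and> card T = k \<and> x \<in> T}"
    then have "finite T" using assms finite_subset by auto
    then have "T = insert x (T - {x})" "card (T - {x}) = k - 1" using T by auto
    then show "T \<in> insert x ` {U. U \<subseteq> S - {x} \<and> card U = k - 1}" using T by blast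
  next
    fix T assume "T \<in> insert x ` {U. U \<subseteq> S - {x} \<and> card U = k - 1}"
    then obtain U where U: "U \<subseteq> S - {x}" "card U = k - 1" "T = insert x U" by auto
    then have "finite U" using assms finite_subset by (metis finite_Diff)
    moreover have "x \<notin> U" using U by auto
    ultimately show "T \<in> {T. T \<subseteq> S \<and> card T = k \<and> x \<in> T}" using U assms by auto
  qed
  have "inj_on (insert x) {U. U \<subseteq> S - {x} \<and> card U = k - 1}"
    by (rule inj_onI) (metis Diff_insert_absorb mem_Collect_eq subset_Diff_insert)
  then have "card {T. T \<subseteq> S \<and> card T = k \<and> x \<in> T} = card {U. U \<subseteq> S - {x} \<and> card U = k - 1}"
    by (simp add: eq card_image)
  also have "\<dots> = card (S - {x}) choose (k - 1)" using assms(1) by (intro n_subsets) simp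
  finally have "card {T. T \<subseteq> S \<and> card T = k \<and> x \<in> T} = card (S - {x}) choose (k - 1)" .
  moreover have "card (S - {x}) = card S - 1" using assms(2) by (rule card_Diff_singleton)
  ultimately show ?thesis by simp
qed

lemma double_count_aux:
  fixes cd :: "nat \<Rightarrow> nat"
  assumes "k \<ge> 1" and cs: "\<And>x. x < n \<Longrightarrow> card {T. T \<subseteq> {..<n} \<and> card T = k \<and> x \<in> T} = (n - 1) choose (k - 1)"
  shows "(\<Sum>T\<in>{T. T \<subseteq> {..<n} \<and> card T = k}. \<Sum>x\<in>T. cd x) = (\<Sum>x<n. cd x) * ((n - 1) choose (k - 1))"
proof -
  let ?K = "{T. T \<subseteq> {..<n} \<and> card T = k}"
  have fK: "finite ?K" by (rule finite_subset[of _ "Pow {..<n}"]) auto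
  have a: "(\<Sum>x\<in>T. cd x) = (\<Sum>x<n. if x \<in> T then cd x else 0)" if "T \<in> ?K" for T
  proof -
    have "(\<Sum>x<n. if x \<in> T then cd x else 0) = (\<Sum>x\<in>{..<n} \<inter> T. cd x)"
      by (simp add: sum.If_cases)
    also have "{..<n} \<inter> T = T" using that by blast
    finally show ?thesis by simp
  qed
  have "(\<Sum>T\<in>?K. \<Sum>x\<in>T. cd x) = (\<Sum>T\<in>?K. \<Sum>x<n. if x \<in> T then cd x else 0)"
    by (rule sum.cong[OF refl]) (rule a)
  also have "\<dots> = (\<Sum>x<n. \<Sum>T\<in>?K. if x \<in> T then cd x else 0)" by (rule sum.swap)
  also have "\<dots> = (\<Sum>x<n. cd x * ((n - 1) choose (k - 1)))"
  proof (rule sum.cong[OF refl])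
    fix x assume x: "x \<in> {..<n}"
    have "(\<Sum>T\<in>?K. if x \<in> T then cd x else 0) = (\<Sum>T\<in>{T \<in> ?K. x \<in> T}. cd x)"
      using fK by (rule sum.inter_filter[symmetric])
    also have "\<dots> = card {T \<in> ?K. x \<in> T} * cd x" by simp
    also have "{T \<in> ?K. x \<in> T} = {T. T \<subseteq> {..<n} \<and> card T = k \<and> x \<in> T}" by blast
    also have "card \<dots> = (n - 1) choose (k - 1)" using cs x by simp
    finally show "(\<Sum>T\<in>?K. if x \<in> T then cd x else 0) = cd x * ((n - 1) choose (k - 1))" by simp
  qed
  also have "\<dots> = (\<Sum>x<n. cd x) * ((n - 1) choose (k - 1))" by (rule sum_distrib_right[symmetric])
  finally show ?thesis .
qed

lemma double_count:
  fixes cd :: "nat \<Rightarrow> nat"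
  assumes "k \<ge> 1"
  shows "(\<Sum>T\<in>{T. T \<subseteq> {..<n} \<and> card T = k}. \<Sum>x\<in>T. cd x) = (\<Sum>x<n. cd x) * ((n - 1) choose (k - 1))"
  by (rule double_count_aux[OF assms]) (use card_subsets_with[of "{..<n}" _ k] assms in simp)


lemma tdeg_subdet:
  fixes cd :: "nat \<Rightarrow> nat"
  assumes "finite T" "card T = k" "\<And>c w. tdeg (Gmat k l r w c :: 'a::comm_ring_1 mpoly) \<le> cd c"
  shows "tdeg (subdet k l r T :: 'a mpoly) \<le> (\<Sum>x\<in>T. cd x)"
proof -
  let ?L = "sorted_list_of_set T"
  have len: "length ?L = k" using assms by simp
  have "(\<Sum>c<k. cd (?L ! c)) = (\<Sum>x\<in>T. cd x)"
  proof -
    have "(\<Sum>c<k. cd (?L ! c)) = sum_list (map cd ?L)"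
      using len by (simp add: sum_list_sum_nth lessThan_atLeast0)
    also have "\<dots> = sum cd (set ?L)" by (simp add: sum_list_distinct_conv_sum_set)
    finally show ?thesis using assms by simp
  qed
  show ?thesis
    unfolding subdet_def detk_def
  proof (rule tdeg_sum)
    fix \<sigma> assume "\<sigma> \<in> {\<sigma>. \<sigma> permutes {0..<k}}"
    then have perm: "\<sigma> permutes {..<k}" by (simp add: lessThan_atLeast0)
    have "tdeg (of_int (sign \<sigma>) * (\<Prod>w<k. Gmat k l r w (?L ! \<sigma> w)) :: 'a mpoly)
        \<le> tdeg (of_int (sign \<sigma>) :: 'a mpoly) + tdeg (\<Prod>w<k. Gmat k l r w (?L ! \<sigma> w) :: 'a mpoly)"
      by (rule tdeg_mult)
    also have "\<dots> \<le> (\<Sum>w<k. tdeg (Gmat k l r w (?L ! \<sigma> w) :: 'a mpoly))"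
      using tdeg_prod[of "\<lambda>w. Gmat k l r w (?L ! \<sigma> w) :: 'a mpoly" "{..<k}"] by simp
    also have "\<dots> \<le> (\<Sum>w<k. cd (?L ! \<sigma> w))" by (intro sum_mono assms(3))
    also have "\<dots> = (\<Sum>c<k. cd (?L ! c))"
      using sum.reindex_bij_betw[OF permutes_imp_bij[OF perm], of "\<lambda>c. cd (?L ! c)"] by simp
    finally show "tdeg (of_int (sign \<sigma>) * (\<Prod>w<k. Gmat k l r w (?L ! \<sigma> w)) :: 'a mpoly) \<le> (\<Sum>x\<in>T. cd x)"
      using \<open>(\<Sum>c<k. cd (?L ! c)) = (\<Sum>x\<in>T. cd x)\<close> by simp
  qed
qed

theorem lemma19:
  fixes m s l k n :: nat and r :: "nat \<Rightarrow> nat" and p :: "'a::{field,finite} mpoly"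
  assumes "m \<ge> 2" and "s \<ge> 1" and "l \<ge> 1" and "\<forall>i<m. r i \<ge> 1"
    and "k = m * l - s" and "k \<ge> l"
    and "n = (\<Sum>i<m. l + r i)"
    and "is_lcm ((\<lambda>T. subdet k l r T) ` Tkl m k l r) p"
  shows "tdeg p \<le> 2 * (n - k) * ((n - 1) choose (k - 1))"
proof -
  have l1: "l \<ge> 1" and k1: "k \<ge> 1" using assms by auto
  have noff: "off l r m = n" using assms by (simp add: off_def)
  define Id where "Id = idc l r ` {..<k}"
  define cd where "cd c = (if c \<in> Id then 0 else 2::nat)" for c
  have cdb: "tdeg (Gmat k l r w c :: 'a mpoly) \<le> cd c" for w c
    using tdeg_Gmat_idc[OF l1] tdeg_Gmat by (auto simp: cd_def Id_def)
  have km: "k \<le> m * l" using assms by simp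
  have IdS: "Id \<subseteq> {..<n}" using idc_lt[OF l1] km noff by (auto simp: Id_def)
  have cId: "card Id = k" unfolding Id_def
    using inj_idc[OF l1, of r] by (metis card_image card_lessThan inj_on_subset subset_UNIV)
  have sumcd: "(\<Sum>x<n. cd x) = 2 * (n - k)"
  proof -
    have "(\<Sum>x<n. cd x) = (\<Sum>x\<in>{..<n} - Id. cd x) + (\<Sum>x\<in>Id. cd x)"
      by (rule sum.subset_diff[OF IdS finite_lessThan])
    also have "(\<Sum>x\<in>Id. cd x) = 0" by (simp add: cd_def)
    also have "(\<Sum>x\<in>{..<n} - Id. cd x) = (\<Sum>x\<in>{..<n} - Id. 2)" by (rule sum.cong) (auto simp: cd_def)
    also have "\<dots> = 2 * card ({..<n} - Id)" by simp
    also have "card ({..<n} - Id) = n - k" using card_Diff_subset[OF _ IdS] cId by (simp add: Id_def)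
    finally show ?thesis by simp
  qed
  let ?K = "{T. T \<subseteq> {..<n} \<and> card T = k}"
  have TK: "Tkl m k l r \<subseteq> ?K" using noff by (auto simp: Tkl_def lessThan_atLeast0)
  have fK: "finite ?K" by (rule finite_subset[of _ "Pow {..<n}"]) auto
  have fT: "finite (Tkl m k l r)" by (rule finite_subset[OF TK fK])
  define F where "F = (\<lambda>T. subdet k l r T :: 'a mpoly) ` Tkl m k l r"
  have fF: "finite F" using fT by (simp add: F_def)
  have lcm: "\<forall>f\<in>F. f dvd p" "\<And>q. (\<forall>f\<in>F. f dvd q) \<Longrightarrow> p dvd q"
    using assms(8) by (auto simp: is_lcm_def F_def)
  show ?thesis
  proof (cases "0 \<in> F")
    case True
    then have "p = 0" using lcm(1) by auto
    then show ?thesis by simp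
  next
    case False
    define P where "P = prod id F"
    have P0: "P \<noteq> 0" using False fF by (auto simp: P_def)
    have "\<forall>f\<in>F. f dvd P"
    proof
      fix f assume "f \<in> F"
      then show "f dvd P" unfolding P_def using dvd_prodI[OF fF, of f id] by simp
    qed
    then have "p dvd P" by (rule lcm(2))
    then obtain c where c: "P = p * c" by (auto elim: dvdE)
    have "c \<noteq> 0" using P0 c by auto
    then have "tdeg p \<le> tdeg (p * c)" by (rule tdeg_mult_ge)
    then have "tdeg p \<le> tdeg P" by (simp only: c)
    also have "\<dots> \<le> (\<Sum>f\<in>F. tdeg (id f))" unfolding P_def by (rule tdeg_prod)
    also have "\<dots> \<le> (\<Sum>T\<in>Tkl m k l r. tdeg (subdet k l r T :: 'a mpoly))"
      unfolding F_def id_def using sum_image_le[OF fT, of "tdeg" "\<lambda>T. subdet k l r T :: 'a mpoly"] by (simp only: o_def zero_le)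
    also have "\<dots> \<le> (\<Sum>T\<in>Tkl m k l r. \<Sum>x\<in>T. cd x)"
    proof (rule sum_mono)
      fix T assume "T \<in> Tkl m k l r"
      then have "T \<in> ?K" using TK by auto
      then have "finite T" "card T = k" by (auto intro: finite_subset[of _ "{..<n}"])
      then show "tdeg (subdet k l r T :: 'a mpoly) \<le> (\<Sum>x\<in>T. cd x)" by (rule tdeg_subdet) (rule cdb)
    qed
    also have "\<dots> \<le> (\<Sum>T\<in>?K. \<Sum>x\<in>T. cd x)" by (rule sum_mono2[OF fK TK]) simp
    also have "\<dots> = (\<Sum>x<n. cd x) * ((n - 1) choose (k - 1))" by (rule double_count[OF k1])
    finally show ?thesis unfolding sumcd .
  qed
qed

end
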